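(* Let $G=G_1\times\cdots\times G_m$ be a direct product of virtually torsion-free groups. Suppose there exist $\alpha,\beta>0$ such that for every $i\in\{1,\dots,m\}$ and every finite $V_i\subset G_i$ such that $\langle V_i\rangle$ has exponential growth, $|V_i^n|\geqslant(\alpha|V_i|)^{\beta n}$ for every $n\in\mathbb{N}$. Then there exist $\alpha',\beta'>0$ such that for every finite $U\subset G$ at least one of the following holds: 1. $\langle U\rangle$ is contained in a direct product of the form $H_1\times H_2$, where $H_2$ does not have exponential growth and the restriction to $\langle U\rangle$ of the projection to $H_1$ is infinite-to-1; 2. $|U^n|\geqslant(\alpha'|U|)^{\beta' n}$ for every $n\in\mathbb{N}$.
   Context: For a finitely generated group $H$ with finite generating set $S$, $H$ has exponential growth if $\lim_{n\to\infty}|B_S(n)|^{1/n}>1$, where $B_S(n)$ is the word-metric ball; a group not assumed finitely generated does not have exponential growth if none of its finitely generated subgroups does. A homomorphism is infinite-to-1 if its kernel is infinite. $U^n=\{u_1\cdots u_n:u_i\in U\}$. *)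

theory Defs
  imports "HOL-Algebra.Algebra" "HOL-Analysis.Analysis"
begin

definition list_prod :: "('a, 'b) monoid_scheme \<Rightarrow> 'a list \<Rightarrow> 'a" where
  "list_prod G xs = foldr (\<lambda>x y. x \<otimes>\<^bsub>G\<^esub> y) xs \<one>\<^bsub>G\<^esub>"

definition prod_set :: "('a, 'b) monoid_scheme \<Rightarrow> 'a set \<Rightarrow> nat \<Rightarrow> 'a set" where
  "prod_set G U n = {list_prod G xs | xs. set xs \<subseteq> U \<and> length xs = n}"

definition word_ball :: "('a, 'b) monoid_scheme \<Rightarrow> 'a set \<Rightarrow> nat \<Rightarrow> 'a set" where
  "word_ball G S n = {list_prod G xs | xs.
      set xs \<subseteq> S \<union> (\<lambda>x. inv\<^bsub>G\<^esub> x) ` S \<and> length xs \<le> n}"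

text \<open>A finitely generated subgroup H has exponential growth: for a finite
  generating set S of H, lim |B_S(n)|^(1/n) > 1 (the limit is independent of S).\<close>
definition fg_exp_growth :: "('a, 'b) monoid_scheme \<Rightarrow> 'a set \<Rightarrow> bool" where
  "fg_exp_growth G H \<longleftrightarrow> (\<exists>S. finite S \<and> S \<subseteq> carrier G \<and> generate G S = H \<and>
      (\<exists>L. L > 1 \<and> (\<lambda>n. root n (real (card (word_ball G S n)))) \<longlonglongrightarrow> L))"

definition has_exp_growth :: "('a, 'b) monoid_scheme \<Rightarrow> 'a set \<Rightarrow> bool" where
  "has_exp_growth G H \<longleftrightarrow> (\<exists>S. finite S \<and> S \<subseteq> H \<and> fg_exp_growth G (generate G S))"

definition torsion_free_subgroup :: "('a, 'b) monoid_scheme \<Rightarrow> 'a set \<Rightarrow> bool" where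
  "torsion_free_subgroup G K \<longleftrightarrow>
     (\<forall>x\<in>K. x \<noteq> \<one>\<^bsub>G\<^esub> \<longrightarrow> (\<forall>n::nat. n > 0 \<longrightarrow> x [^]\<^bsub>G\<^esub> n \<noteq> \<one>\<^bsub>G\<^esub>))"

definition virtually_torsion_free :: "('a, 'b) monoid_scheme \<Rightarrow> bool" where
  "virtually_torsion_free G \<longleftrightarrow>
     (\<exists>K. subgroup K G \<and> finite (rcosets\<^bsub>G\<^esub> K) \<and> torsion_free_subgroup G K)"

end

theory Submission
  imports Defs
begin

lemma list_prod_Nil [simp]: "list_prod G [] = \<one>\<^bsub>G\<^esub>"
  by (simp add: list_prod_def)
lemma list_prod_Cons [simp]: "list_prod G (x # xs) = x \<otimes>\<^bsub>G\<^esub> list_prod G xs"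
  by (simp add: list_prod_def)

lemma word_ballI: "x = list_prod G xs \<Longrightarrow> set xs \<subseteq> S \<union> (\<lambda>x. inv\<^bsub>G\<^esub> x) ` S \<Longrightarrow> length xs \<le> n
   \<Longrightarrow> x \<in> word_ball G S n"
  unfolding word_ball_def by blast
lemma word_ballE: "x \<in> word_ball G S n \<Longrightarrow>
  (\<And>xs. x = list_prod G xs \<Longrightarrow> set xs \<subseteq> S \<union> (\<lambda>x. inv\<^bsub>G\<^esub> x) ` S \<Longrightarrow> length xs \<le> n \<Longrightarrow> P) \<Longrightarrow> P"
  unfolding word_ball_def by blast
lemma prod_setI: "x = list_prod G xs \<Longrightarrow> set xs \<subseteq> S \<Longrightarrow> length xs = n
   \<Longrightarrow> x \<in> prod_set G S n"
  unfolding prod_set_def by blast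
lemma prod_setE: "x \<in> prod_set G S n \<Longrightarrow>
  (\<And>xs. x = list_prod G xs \<Longrightarrow> set xs \<subseteq> S \<Longrightarrow> length xs = n \<Longrightarrow> P) \<Longrightarrow> P"
  unfolding prod_set_def by blast

context group begin

lemma list_prod_closed: "set xs \<subseteq> carrier G \<Longrightarrow> list_prod G xs \<in> carrier G"
  by (induction xs) auto

lemma list_prod_append: "set xs \<subseteq> carrier G \<Longrightarrow> set ys \<subseteq> carrier G \<Longrightarrow>
   list_prod G (xs @ ys) = list_prod G xs \<otimes> list_prod G ys"
  by (induction xs) (auto simp: m_assoc list_prod_closed)

lemma word_ball_alt: "word_ball G S n = list_prod G ` {xs. set xs \<subseteq> S \<union> (\<lambda>x. inv x) ` S \<and> length xs \<le> n}"
  unfolding word_ball_def by auto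

lemma finite_word_ball: "finite S \<Longrightarrow> finite (word_ball G S n)"
  unfolding word_ball_alt by (intro finite_imageI finite_lists_length_le) auto

lemma one_word_ball: "\<one> \<in> word_ball G S n"
  unfolding word_ball_def by (auto intro!: exI[of _ "[]"])

lemma card_word_ball_ge1: "finite S \<Longrightarrow> card (word_ball G S n) \<ge> 1"
  using finite_word_ball one_word_ball by (metis One_nat_def Suc_leI card_gt_0_iff empty_iff)

lemma word_ball_mono: "a \<le> b \<Longrightarrow> word_ball G S a \<subseteq> word_ball G S b"
  unfolding word_ball_def by auto

lemma word_ball_carrier: "S \<subseteq> carrier G \<Longrightarrow> word_ball G S n \<subseteq> carrier G"
  unfolding word_ball_def by (auto intro!: list_prod_closed)

lemma word_ball_mult: assumes "S \<subseteq> carrier G" "x \<in> word_ball G S a" "y \<in> word_ball G S b"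
  shows "x \<otimes> y \<in> word_ball G S (a + b)"
proof -
  obtain xs where xs: "x = list_prod G xs" "set xs \<subseteq> S \<union> (\<lambda>x. inv x) ` S" "length xs \<le> a"
    using assms(2) unfolding word_ball_def by auto
  obtain ys where ys: "y = list_prod G ys" "set ys \<subseteq> S \<union> (\<lambda>x. inv x) ` S" "length ys \<le> b"
    using assms(3) unfolding word_ball_def by auto
  have c: "S \<union> (\<lambda>x. inv x) ` S \<subseteq> carrier G" using assms(1) by auto
  have "set xs \<subseteq> carrier G" "set ys \<subseteq> carrier G" using xs ys c by auto
  then have "x \<otimes> y = list_prod G (xs @ ys)"
    using xs ys by (simp add: list_prod_append)
  then show ?thesis unfolding word_ball_def using xs ys by (auto intro!: exI[of _ "xs @ ys"])
qed

lemma word_ball_split: assumes "S \<subseteq> carrier G"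
  shows "word_ball G S (a + b) \<subseteq> (\<lambda>(x, y). x \<otimes> y) ` (word_ball G S a \<times> word_ball G S b)"
proof
  fix z assume "z \<in> word_ball G S (a + b)"
  then obtain zs where zs: "z = list_prod G zs" "set zs \<subseteq> S \<union> (\<lambda>x. inv x) ` S" "length zs \<le> a + b"
    unfolding word_ball_def by auto
  have c: "S \<union> (\<lambda>x. inv x) ` S \<subseteq> carrier G" using assms(1) by auto
  have "z = list_prod G (take a zs) \<otimes> list_prod G (drop a zs)"
    using zs c list_prod_append[of "take a zs" "drop a zs"]
    by (metis append_take_drop_id order_trans set_drop_subset set_take_subset)
  moreover have "list_prod G (take a zs) \<in> word_ball G S a"
    unfolding word_ball_def using zs by (auto intro!: exI[of _ "take a zs"] dest: in_set_takeD)
  moreover have "list_prod G (drop a zs) \<in> word_ball G S b"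
    unfolding word_ball_def using zs by (auto intro!: exI[of _ "drop a zs"] dest: in_set_dropD)
  ultimately show "z \<in> (\<lambda>(x, y). x \<otimes> y) ` (word_ball G S a \<times> word_ball G S b)"
    by force
qed

lemma card_word_ball_submult: assumes "S \<subseteq> carrier G" "finite S"
  shows "card (word_ball G S (a + b)) \<le> card (word_ball G S a) * card (word_ball G S b)"
proof -
  have "card (word_ball G S (a + b)) \<le> card ((\<lambda>(x, y). x \<otimes> y) ` (word_ball G S a \<times> word_ball G S b))"
    by (intro card_mono finite_imageI finite_cartesian_product finite_word_ball assms word_ball_split)
  also have "\<dots> \<le> card (word_ball G S a \<times> word_ball G S b)"
    by (intro card_image_le finite_cartesian_product finite_word_ball assms)
  finally show ?thesis by (simp add: card_cartesian_product)
qed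

lemma word_ball_inv: assumes "S \<subseteq> carrier G" "x \<in> word_ball G S n"
  shows "inv x \<in> word_ball G S n"
proof -
  obtain xs where xs: "x = list_prod G xs" "set xs \<subseteq> S \<union> (\<lambda>x. inv x) ` S" "length xs \<le> n"
    using assms(2) unfolding word_ball_def by auto
  have c: "S \<union> (\<lambda>x. inv x) ` S \<subseteq> carrier G" using assms(1) by auto
  have "set xs \<subseteq> S \<union> (\<lambda>x. inv x) ` S \<Longrightarrow> inv (list_prod G xs) = list_prod G (rev (map (\<lambda>x. inv x) xs))
        \<and> set (rev (map (\<lambda>x. inv x) xs)) \<subseteq> S \<union> (\<lambda>x. inv x) ` S" for xs
  proof (induction xs)
    case Nil then show ?case by simp
  next
    case (Cons y ys)
    have y: "y \<in> carrier G" using Cons.prems c by auto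
    have ys: "set ys \<subseteq> carrier G" using Cons.prems c by auto
    have iy: "inv y \<in> S \<union> (\<lambda>x. inv x) ` S" using Cons.prems assms(1) by (auto simp: subset_iff)
    have "inv (list_prod G (y # ys)) = inv (list_prod G ys) \<otimes> inv y"
      using y ys by (simp add: inv_mult_group list_prod_closed)
    also have "\<dots> = list_prod G (rev (map (\<lambda>x. inv x) ys) @ [inv y])"
      using Cons y ys c by (subst list_prod_append) auto
    finally show ?case using Cons iy by auto
  qed
  from this[OF xs(2)] have "inv x = list_prod G (rev (map (\<lambda>x. inv x) xs))"
     "set (rev (map (\<lambda>x. inv x) xs)) \<subseteq> S \<union> (\<lambda>x. inv x) ` S" using xs(1) by auto
  then show ?thesis using xs(3) unfolding word_ball_def by (intro CollectI exI[of _ "rev (map (\<lambda>x. inv x) xs)"]) auto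
qed

lemma generate_in_word_ball: assumes "S \<subseteq> carrier G" "h \<in> generate G S"
  shows "\<exists>k. h \<in> word_ball G S k"
  using assms(2)
proof induction
  case one then show ?case using one_word_ball by blast
next
  case (incl h) then have "h = list_prod G [h]" using assms(1) by auto
  then show ?case using incl unfolding word_ball_def by (auto intro!: exI[of _ 1] exI[of _ "[h]"])
next
  case (inv h) then have "inv h = list_prod G [inv h]" using assms(1) by auto
  then show ?case using inv unfolding word_ball_def by (auto intro!: exI[of _ 1] exI[of _ "[inv h]"])
next
  case (eng h1 h2) then show ?case using word_ball_mult[OF assms(1)] by blast
qed

lemma word_ball_compare: assumes "S \<subseteq> carrier G" "finite S'" "S' \<subseteq> generate G S"
  shows "\<exists>k\<ge>1. \<forall>n. word_ball G S' n \<subseteq> word_ball G S (k * n)"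
proof -
  have "\<forall>s\<in>S'. \<exists>k. s \<in> word_ball G S k" using generate_in_word_ball assms by blast
  then obtain f where f: "\<And>s. s \<in> S' \<Longrightarrow> s \<in> word_ball G S (f s)" by metis
  define k where "k = Suc (\<Sum>s\<in>S'. f s)"
  have k1: "k \<ge> 1" by (simp add: k_def)
  have fk: "s \<in> word_ball G S k" if "s \<in> S'" for s
  proof -
    have "f s \<le> (\<Sum>s\<in>S'. f s)" using that assms(2) by (intro member_le_sum) auto
    then show ?thesis using f[OF that] word_ball_mono[of "f s" k] by (auto simp: k_def)
  qed
  have S'c: "S' \<subseteq> carrier G" using assms generate_incl by blast
  have fk2: "s \<in> word_ball G S k" if "s \<in> S' \<union> (\<lambda>x. inv x) ` S'" for s
    using that fk word_ball_inv[OF assms(1)] by auto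
  have "set xs \<subseteq> S' \<union> (\<lambda>x. inv x) ` S' \<Longrightarrow> list_prod G xs \<in> word_ball G S (k * length xs)" for xs
  proof (induction xs)
    case Nil then show ?case using one_word_ball by simp
  next
    case (Cons y ys)
    have "y \<in> word_ball G S k" using Cons.prems fk2 by auto
    moreover have "list_prod G ys \<in> word_ball G S (k * length ys)" using Cons by auto
    ultimately show ?case using word_ball_mult[OF assms(1)] by (simp add: add.commute)
  qed
  note wl = this
  have "\<forall>n. word_ball G S' n \<subseteq> word_ball G S (k * n)"
  proof (intro allI subsetI)
    fix n x assume "x \<in> word_ball G S' n"
    then obtain xs where xs: "x = list_prod G xs" "set xs \<subseteq> S' \<union> (\<lambda>x. inv x) ` S'" "length xs \<le> n"
      unfolding word_ball_def by auto
    then have "x \<in> word_ball G S (k * length xs)" using wl by auto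
    moreover have "k * length xs \<le> k * n" using xs(3) by simp
    ultimately show "x \<in> word_ball G S (k * n)" using word_ball_mono by blast
  qed
  then show ?thesis using k1 by blast
qed

end

lemma subadd_bound:
  fixes b :: "nat \<Rightarrow> real"
  assumes sub: "\<And>m n. b (m + n) \<le> b m + b n"
  shows "b (q * k + r) \<le> real q * b k + b r"
proof (induction q)
  case 0 then show ?case by simp
next
  case (Suc q)
  have "b (Suc q * k + r) = b (k + (q * k + r))" by (simp add: add.assoc)
  also have "\<dots> \<le> b k + b (q * k + r)" by (rule sub)
  also have "\<dots> \<le> b k + (real q * b k + b r)" using Suc by simp
  finally show ?case by (simp add: algebra_simps)
qed

lemma fekete_log:
  fixes b :: "nat \<Rightarrow> real"
  assumes nn: "\<And>n. b n \<ge> 0" and sub: "\<And>m n. b (m + n) \<le> b m + b n"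
  shows "(\<lambda>n. b n / real n) \<longlonglongrightarrow> Inf ((\<lambda>n. b n / real n) ` {1..})"
proof (rule LIMSEQ_I)
  define A where "A = (\<lambda>n. b n / real n) ` {1..}"
  define l where "l = Inf A"
  have bdd: "bdd_below A" unfolding A_def using nn by (intro bdd_belowI[of _ 0]) auto
  have ne: "A \<noteq> {}" unfolding A_def by auto
  fix r :: real assume r: "r > 0"
  have "l < l + r / 2" using r by simp
  then obtain x where x: "x \<in> A" "x < l + r / 2" unfolding l_def using cInf_lessD[OF ne] by blast
  then obtain k where k: "k \<ge> 1" "b k / real k < l + r / 2" unfolding A_def by auto
  define M where "M = (\<Sum>j<k. b j)"
  have M: "b j \<le> M" if "j < k" for j
    unfolding M_def using that nn by (intro member_le_sum) auto
  have M0: "M \<ge> 0" unfolding M_def using nn by (simp add: sum_nonneg)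
  obtain N :: nat where N: "N > 2 * M / r" using reals_Archimedean2 by blast
  show "\<exists>no. \<forall>n\<ge>no. norm (b n / real n - Inf ((\<lambda>n. b n / real n) ` {1..})) < r"
  proof (intro exI[of _ "Suc N"] allI impI)
    fix n assume n: "n \<ge> Suc N"
    then have n1: "n \<ge> 1" and npos: "real n > 0" by auto
    have lo: "l \<le> b n / real n" unfolding l_def A_def
      using bdd n1 unfolding A_def by (intro cInf_lower) auto
    have "n = (n div k) * k + n mod k" by simp
    then have "b n \<le> real (n div k) * b k + b (n mod k)" using subadd_bound[OF sub] by metis
    also have "\<dots> \<le> real (n div k) * b k + M" using M k by simp
    finally have bn: "b n \<le> real (n div k) * b k + M" .
    have dk: "real (n div k) * real k \<le> real n"
      by (metis of_nat_le_iff of_nat_mult div_times_less_eq_dividend)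
    have "real (n div k) * b k = (real (n div k) * real k) * (b k / real k)" using k by simp
    also have "\<dots> \<le> real n * (b k / real k)" using dk nn k by (intro mult_right_mono) auto
    finally have "b n \<le> real n * (b k / real k) + M" using bn by simp
    then have "b n / real n \<le> b k / real k + M / real n" using npos by (simp add: field_simps)
    moreover have "M / real n < r / 2"
    proof -
      have "2 * M / r < real n" using N n by simp
      then show ?thesis using r npos by (simp add: field_simps)
    qed
    ultimately have hi: "b n / real n < l + r" using k by linarith
    have "\<bar>b n / real n - l\<bar> < r" using lo hi by (simp only: abs_less_iff) linarith
    then show "norm (b n / real n - Inf ((\<lambda>n. b n / real n) ` {1..})) < r"
      unfolding l_def A_def real_norm_def .
  qed
qed

lemma fekete_root:
  fixes a :: "nat \<Rightarrow> real"
  assumes ge1: "\<And>n. a n \<ge> 1" and sub: "\<And>m n. a (m + n) \<le> a m * a n"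
  shows "\<exists>L\<ge>1. (\<lambda>n. root n (a n)) \<longlonglongrightarrow> L"
proof -
  define b where "b n = ln (a n)" for n
  have nn: "b n \<ge> 0" for n unfolding b_def using ge1[of n] by simp
  have sb: "b (m + n) \<le> b m + b n" for m n
  proof -
    have "ln (a (m + n)) \<le> ln (a m * a n)" using sub[of m n] ge1[of "m+n"] by simp
    also have "\<dots> = ln (a m) + ln (a n)" using ge1[of m] ge1[of n] by (simp add: ln_mult)
    finally show ?thesis unfolding b_def .
  qed
  define l where "l = Inf ((\<lambda>n. b n / real n) ` {1..})"
  have lim: "(\<lambda>n. b n / real n) \<longlonglongrightarrow> l" unfolding l_def by (rule fekete_log[OF nn sb])
  have l0: "l \<ge> 0" using nn by (intro LIMSEQ_le_const[OF lim]) auto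
  have "(\<lambda>n. exp (b n / real n)) \<longlonglongrightarrow> exp l" by (intro tendsto_exp lim)
  moreover have "eventually (\<lambda>n. exp (b n / real n) = root n (a n)) sequentially"
  proof (rule eventually_sequentiallyI[of 1])
    fix n :: nat assume "n \<ge> 1"
    then have "root n (a n) = a n powr (1 / real n)" using ge1[of n] by (intro root_powr_inverse) auto
    also have "\<dots> = exp (b n / real n)" unfolding b_def powr_def using ge1[of n] by simp
    finally show "exp (b n / real n) = root n (a n)" by simp
  qed
  ultimately have "(\<lambda>n. root n (a n)) \<longlonglongrightarrow> exp l" by (rule Lim_transform_eventually)
  then show ?thesis using l0 by (intro exI[of _ "exp l"]) auto
qed

definition gr :: "('a, 'b) monoid_scheme \<Rightarrow> 'a set \<Rightarrow> nat \<Rightarrow> real" where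
  "gr G S n = root n (real (card (word_ball G S n)))"

context group begin

lemma gr_converges: assumes "S \<subseteq> carrier G" "finite S"
  shows "\<exists>L\<ge>1. gr G S \<longlonglongrightarrow> L"
  unfolding gr_def
proof (rule fekete_root)
  show "1 \<le> real (card (word_ball G S n))" for n using card_word_ball_ge1[OF assms(2)] by simp
  show "real (card (word_ball G S (m + n))) \<le> real (card (word_ball G S m)) * real (card (word_ball G S n))" for m n
    using card_word_ball_submult[OF assms] by (metis of_nat_le_iff of_nat_mult)
qed

lemma gr_nonneg: "gr G S n \<ge> 0"
  unfolding gr_def by (rule real_root_ge_zero) simp

lemma growth_compare:
  assumes S: "S \<subseteq> carrier G" "finite S" and S': "finite S'" "S' \<subseteq> generate G S"
    and L: "gr G S \<longlonglongrightarrow> L" "L \<le> 1" and L': "gr G S' \<longlonglongrightarrow> L'"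
  shows "L' \<le> 1"
proof -
  obtain k where k: "k \<ge> 1" "\<And>n. word_ball G S' n \<subseteq> word_ball G S (k * n)"
    using word_ball_compare[OF S(1) S'] by blast
  have sm: "strict_mono (\<lambda>n. k * n)" using k(1) by (intro strict_monoI) auto
  have "(gr G S \<circ> (\<lambda>n. k * n)) \<longlonglongrightarrow> L" by (rule LIMSEQ_subseq_LIMSEQ[OF L(1) sm])
  then have lim: "(\<lambda>n. gr G S (k * n) ^ k) \<longlonglongrightarrow> L ^ k" by (intro tendsto_power) (simp add: o_def)
  have le: "gr G S' n \<le> gr G S (k * n) ^ k" if "n \<ge> 1" for n
  proof -
    have "card (word_ball G S' n) \<le> card (word_ball G S (k * n))"
      by (intro card_mono finite_word_ball S k)
    then have "gr G S' n \<le> root n (real (card (word_ball G S (k * n))))"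
      unfolding gr_def using that by (intro real_root_le_mono) auto
    also have "\<dots> = root k (root n (real (card (word_ball G S (k * n))))) ^ k"
      using k(1) by (intro real_root_pow_pos2[symmetric] real_root_ge_zero) auto
    also have "\<dots> = gr G S (k * n) ^ k" unfolding gr_def by (simp add: real_root_mult_exp)
    finally show ?thesis .
  qed
  have ev: "\<exists>N. \<forall>n\<ge>N. gr G S' n \<le> gr G S (k * n) ^ k" using le by blast
  have "L' \<le> L ^ k" by (rule LIMSEQ_le[OF L' lim ev])
  moreover have L0: "L \<ge> 0" using gr_nonneg by (intro LIMSEQ_le_const[OF L(1)]) auto
  moreover have "L ^ k \<le> 1" by (rule power_le_one[OF L0 L(2)])
  ultimately show ?thesis by linarith
qed

lemma gr_eq: "gr G S = (\<lambda>n. root n (real (card (word_ball G S n))))"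
  by (rule ext) (simp add: gr_def)

lemma not_has_exp_growthI:
  assumes S: "S \<subseteq> carrier G" "finite S" and L: "gr G S \<longlonglongrightarrow> L" "L \<le> 1"
  shows "\<not> has_exp_growth G (generate G S)"
proof
  assume "has_exp_growth G (generate G S)"
  then obtain S0 where S0: "finite S0" "S0 \<subseteq> generate G S" "fg_exp_growth G (generate G S0)"
    unfolding has_exp_growth_def by blast
  from S0(3) obtain S' where S': "finite S'" "S' \<subseteq> carrier G" "generate G S' = generate G S0"
    and ex: "\<exists>L. L > 1 \<and> (\<lambda>n. root n (real (card (word_ball G S' n)))) \<longlonglongrightarrow> L"
    unfolding fg_exp_growth_def by blast
  from ex obtain L' where L': "L' > 1" "gr G S' \<longlonglongrightarrow> L'" unfolding gr_eq by blast
  have "S' \<subseteq> generate G S'" by (auto intro: generate.incl)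
  also have "\<dots> \<subseteq> generate G S" unfolding S'(3)
    using S0(2) generate_subgroup_incl generate_is_subgroup[OF S(1)] by blast
  finally have "S' \<subseteq> generate G S" .
  from growth_compare[OF S S'(1) this L L'(2)] have "L' \<le> 1" .
  then show False using L'(1) by simp
qed

lemma fg_exp_growthI:
  assumes S: "S \<subseteq> carrier G" "finite S" and L: "gr G S \<longlonglongrightarrow> L" "L > 1"
  shows "fg_exp_growth G (generate G S)"
  unfolding fg_exp_growth_def
  by (rule exI[of _ S]) (use S L in \<open>auto simp: gr_eq\<close>)

end

lemma list_prod_product:
  assumes "j \<in> J"
  shows "list_prod (product_group J G) xs j = list_prod (G j) (map (\<lambda>x. x j) xs)"
  by (induction xs) (use assms in auto)

lemma finite_prod_set: "finite U \<Longrightarrow> finite (prod_set G U n)"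
proof -
  assume "finite U"
  then have fin: "finite {xs. set xs \<subseteq> U \<and> length xs = n}" by (rule finite_lists_length_eq)
  have eq: "prod_set G U n = list_prod G ` {xs. set xs \<subseteq> U \<and> length xs = n}"
    unfolding prod_set_def by blast
  show ?thesis unfolding eq by (rule finite_imageI[OF fin])
qed

lemma prod_set_proj:
  assumes "j \<in> J" "U \<subseteq> carrier (product_group J G)"
  shows "prod_set (G j) ((\<lambda>x. x j) ` U) n \<subseteq> (\<lambda>x. x j) ` prod_set (product_group J G) U n"
proof
  fix y assume "y \<in> prod_set (G j) ((\<lambda>x. x j) ` U) n"
  then obtain ys where ys: "y = list_prod (G j) ys" "set ys \<subseteq> (\<lambda>x. x j) ` U" "length ys = n"
    by (rule prod_setE)
  define f where "f y = (SOME x. x \<in> U \<and> x j = y)" for y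
  have f: "f z \<in> U \<and> f z j = z" if "z \<in> (\<lambda>x. x j) ` U" for z
  proof -
    from that obtain x where x: "x \<in> U" "z = x j" by (rule imageE)
    have "\<exists>x. x \<in> U \<and> x j = z" using x by blast
    then show ?thesis unfolding f_def by (rule someI_ex)
  qed
  define xs where "xs = map f ys"
  have sx: "set xs \<subseteq> U"
  proof
    fix w assume "w \<in> set xs"
    then obtain z where z: "z \<in> set ys" "w = f z" unfolding xs_def set_map by (rule imageE)
    then have "z \<in> (\<lambda>x. x j) ` U" using ys(2) by blast
    then show "w \<in> U" using f z(2) by blast
  qed
  have lx: "length xs = n" unfolding xs_def using ys(3) by (simp only: length_map)
  have "map (\<lambda>x. x j) xs = map ((\<lambda>x. x j) \<circ> f) ys" unfolding xs_def by (rule map_map)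
  also have "\<dots> = ys"
  proof (rule map_idI)
    fix z assume "z \<in> set ys"
    then have "z \<in> (\<lambda>x. x j) ` U" using ys(2) by blast
    then show "((\<lambda>x. x j) \<circ> f) z = z" using f by (simp only: o_def)
  qed
  finally have mp: "map (\<lambda>x. x j) xs = ys" .
  from mp have eq: "list_prod (product_group J G) xs j = y"
    using list_prod_product[OF assms(1), of G xs] ys(1) by (simp only:)
  have mem: "list_prod (product_group J G) xs \<in> prod_set (product_group J G) U n"
    by (rule prod_setI[OF refl sx lx])
  show "y \<in> (\<lambda>x. x j) ` prod_set (product_group J G) U n"
    using imageI[OF mem, of "\<lambda>x. x j"] unfolding eq .
qed

lemma card_prod_set_proj:
  assumes "j \<in> J" "U \<subseteq> carrier (product_group J G)" "finite U"
  shows "card (prod_set (G j) ((\<lambda>x. x j) ` U) n) \<le> card (prod_set (product_group J G) U n)"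
proof -
  have "card (prod_set (G j) ((\<lambda>x. x j) ` U) n) \<le> card ((\<lambda>x. x j) ` prod_set (product_group J G) U n)"
    by (intro card_mono finite_imageI finite_prod_set assms prod_set_proj)
  also have "\<dots> \<le> card (prod_set (product_group J G) U n)"
    by (intro card_image_le finite_prod_set assms)
  finally show ?thesis .
qed

lemma word_ball_product:
  assumes grp: "\<And>j. j \<in> J \<Longrightarrow> group (G j)" and T: "T \<subseteq> carrier (product_group J G)"
  shows "word_ball (product_group J G) T n \<subseteq> (\<Pi>\<^sub>E j\<in>J. word_ball (G j) ((\<lambda>x. x j) ` T) n)"
proof
  let ?P = "product_group J G"
  interpret P: group ?P using grp by simp
  fix x assume "x \<in> word_ball ?P T n"
  then obtain xs where xs: "x = list_prod ?P xs" "set xs \<subseteq> T \<union> (\<lambda>x. inv\<^bsub>?P\<^esub> x) ` T" "length xs \<le> n"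
    by (rule word_ballE)
  have xsc: "set xs \<subseteq> carrier ?P" using xs(2) T P.inv_closed by blast
  have xc: "x \<in> carrier ?P" using P.list_prod_closed[OF xsc] xs(1) by simp
  show "x \<in> (\<Pi>\<^sub>E j\<in>J. word_ball (G j) ((\<lambda>x. x j) ` T) n)"
  proof (rule PiE_I)
    fix j assume j: "j \<in> J"
    have "x j = list_prod (G j) (map (\<lambda>x. x j) xs)" using xs(1) list_prod_product[OF j] by simp
    moreover have "set (map (\<lambda>x. x j) xs) \<subseteq> (\<lambda>x. x j) ` T \<union> (\<lambda>x. inv\<^bsub>G j\<^esub> x) ` (\<lambda>x. x j) ` T"
    proof
      fix z assume "z \<in> set (map (\<lambda>x. x j) xs)"
      then obtain w where w: "w \<in> set xs" "z = w j" unfolding set_map by blast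
      then consider "w \<in> T" | t where "t \<in> T" "w = inv\<^bsub>?P\<^esub> t" using xs(2) by blast
      then show "z \<in> (\<lambda>x. x j) ` T \<union> (\<lambda>x. inv\<^bsub>G j\<^esub> x) ` (\<lambda>x. x j) ` T"
      proof cases
        case 1 then show ?thesis using w by blast
      next
        case 2
        have "t \<in> carrier ?P" using 2(1) T by blast
        then have tc: "t \<in> (\<Pi>\<^sub>E i\<in>J. carrier (G i))" by simp
        have "inv\<^bsub>?P\<^esub> t = (\<lambda>i\<in>J. inv\<^bsub>G i\<^esub> (t i))" by (rule inv_product_group[OF tc grp])
        then have "z = inv\<^bsub>G j\<^esub> (t j)" using w(2) 2(2) j by simp
        then show ?thesis using 2 by blast
      qed
    qed
    moreover have "length (map (\<lambda>x. x j) xs) \<le> n" using xs(3) by simp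
    ultimately show "x j \<in> word_ball (G j) ((\<lambda>x. x j) ` T) n"
      by (rule word_ballI)
  next
    fix j assume j: "j \<notin> J"
    from xc have "x \<in> (\<Pi>\<^sub>E i\<in>J. carrier (G i))" by (simp only: carrier_product_group)
    from this j show "x j = undefined" by (rule PiE_arb)
  qed
qed

lemma root_prod:
  assumes "finite J" "n > 0" "\<And>j. j \<in> J \<Longrightarrow> f j \<ge> 0"
  shows "root n (\<Prod>j\<in>J. f j) = (\<Prod>j\<in>J. root n (f j))"
  using assms(1,3) by (induction J rule: finite_induct) (use assms(2) in \<open>auto simp: real_root_mult\<close>)

lemma product_not_exp:
  assumes J: "finite J" and grp: "\<And>j. j \<in> J \<Longrightarrow> group (G j)"
    and T: "T \<subseteq> carrier (product_group J G)" "finite T"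
    and lim: "\<And>j. j \<in> J \<Longrightarrow> gr (G j) ((\<lambda>x. x j) ` T) \<longlonglongrightarrow> 1"
  shows "\<not> has_exp_growth (product_group J G) (generate (product_group J G) T)"
proof -
  let ?P = "product_group J G"
  interpret P: group ?P using grp by simp
  obtain L where L: "gr ?P T \<longlonglongrightarrow> L" using P.gr_converges[OF T] by blast
  have Tj: "(\<lambda>x. x j) ` T \<subseteq> carrier (G j)" "finite ((\<lambda>x. x j) ` T)" if "j \<in> J" for j
    using T that apply (fastforce simp: PiE_iff)
    using T(2) by (rule finite_imageI)
  have fw: "finite (word_ball (G j) ((\<lambda>x. x j) ` T) n)" if "j \<in> J" for j n
    using group.finite_word_ball[OF grp[OF that] Tj(2)[OF that]] .
  have plim: "(\<lambda>n. \<Prod>j\<in>J. gr (G j) ((\<lambda>x. x j) ` T) n) \<longlonglongrightarrow> (\<Prod>j\<in>J. (1::real))"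
    by (intro tendsto_prod lim)
  have le: "gr ?P T n \<le> (\<Prod>j\<in>J. gr (G j) ((\<lambda>x. x j) ` T) n)" if "n \<ge> 1" for n
  proof -
    have "card (word_ball ?P T n) \<le> card (\<Pi>\<^sub>E j\<in>J. word_ball (G j) ((\<lambda>x. x j) ` T) n)"
      using fw by (intro card_mono finite_PiE J word_ball_product grp T) auto
    also have "\<dots> = (\<Prod>j\<in>J. card (word_ball (G j) ((\<lambda>x. x j) ` T) n))"
      by (rule card_PiE[OF J])
    finally have c1: "card (word_ball ?P T n) \<le> (\<Prod>j\<in>J. card (word_ball (G j) ((\<lambda>x. x j) ` T) n))" .
    have "real (card (word_ball ?P T n)) \<le> real (\<Prod>j\<in>J. card (word_ball (G j) ((\<lambda>x. x j) ` T) n))"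
      using c1 by (simp only: of_nat_le_iff)
    also have "\<dots> = (\<Prod>j\<in>J. real (card (word_ball (G j) ((\<lambda>x. x j) ` T) n)))"
      by (rule of_nat_prod)
    finally have "real (card (word_ball ?P T n)) \<le> (\<Prod>j\<in>J. real (card (word_ball (G j) ((\<lambda>x. x j) ` T) n)))" .
    then have "gr ?P T n \<le> root n (\<Prod>j\<in>J. real (card (word_ball (G j) ((\<lambda>x. x j) ` T) n)))"
      unfolding gr_def using that by (intro real_root_le_mono) auto
    also have "\<dots> = (\<Prod>j\<in>J. gr (G j) ((\<lambda>x. x j) ` T) n)"
      unfolding gr_def using that by (intro root_prod J) auto
    finally show ?thesis .
  qed
  have "L \<le> 1"
    using LIMSEQ_le[OF L plim] le by auto
  then show ?thesis using P.not_has_exp_growthI[OF T L] by blast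
qed

lemma (in group) finite_subgroup_card_le:
  assumes K: "subgroup K G" "finite (rcosets K)" "torsion_free_subgroup G K"
    and F: "subgroup F G" "finite F"
  shows "card F \<le> card (rcosets K)"
proof -
  interpret SF: group "G\<lparr>carrier := F\<rparr>" by (rule subgroup_imp_group[OF F(1)])
  have Fc: "F \<subseteq> carrier G" using subgroup.subset[OF F(1)] .
  have Kc: "K \<subseteq> carrier G" using subgroup.subset[OF K(1)] .
  have ordpos: "Coset.order (G\<lparr>carrier := F\<rparr>) > 0"
  proof -
    have "\<one> \<in> F" using subgroup.one_closed[OF F(1)] .
    then have "card F > 0" using F(2) card_gt_0_iff by blast
    then show ?thesis unfolding Coset.order_def by simp
  qed
  have inj: "inj_on (\<lambda>f. K #> f) F"
  proof (rule inj_onI)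
    fix f g assume f: "f \<in> F" and g: "g \<in> F" and eq: "K #> f = K #> g"
    have fc: "f \<in> carrier G" and gc: "g \<in> carrier G" using f g Fc by auto
    have "f \<in> K #> g" using rcos_self[OF fc K(1)] eq by simp
    then have zK: "f \<otimes> inv g \<in> K" by (rule subgroup.rcos_module_imp[OF K(1) is_group gc])
    have zF: "f \<otimes> inv g \<in> F" using f g F(1) by (simp add: subgroup.m_closed subgroup.m_inv_closed)
    have "(f \<otimes> inv g) [^]\<^bsub>G\<lparr>carrier := F\<rparr>\<^esub> Coset.order (G\<lparr>carrier := F\<rparr>) = \<one>\<^bsub>G\<lparr>carrier := F\<rparr>\<^esub>"
      using SF.pow_order_eq_1 zF by simp
    then have pw: "(f \<otimes> inv g) [^] Coset.order (G\<lparr>carrier := F\<rparr>) = \<one>"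
      by (simp add: nat_pow_consistent[symmetric])
    have "f \<otimes> inv g = \<one>"
    proof (rule ccontr)
      assume "f \<otimes> inv g \<noteq> \<one>"
      then show False using K(3) zK pw ordpos unfolding torsion_free_subgroup_def by blast
    qed
    then have "f = \<one> \<otimes> g" by (rule iffD1[OF inv_solve_right'[OF one_closed fc gc]])
    then show "f = g" using gc by simp
  qed
  have "(\<lambda>f. K #> f) ` F \<subseteq> rcosets K" using rcosetsI[OF Kc] Fc by blast
  then have "card ((\<lambda>f. K #> f) ` F) \<le> card (rcosets K)" using K(2) by (rule card_mono[rotated])
  then show ?thesis using card_image[OF inj] by simp
qed

lemma proj_hom:
  assumes "i \<in> M" "group (G i)"
  shows "(\<lambda>x. x i) \<in> hom (product_group M G) (G i)"
proof (rule homI)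
  fix x assume "x \<in> carrier (product_group M G)"
  then have "x \<in> (\<Pi>\<^sub>E i\<in>M. carrier (G i))" by (simp only: carrier_product_group)
  then show "x i \<in> carrier (G i)" using assms(1) by (rule PiE_mem)
next
  fix x y assume "x \<in> carrier (product_group M G)" "y \<in> carrier (product_group M G)"
  show "(x \<otimes>\<^bsub>product_group M G\<^esub> y) i = x i \<otimes>\<^bsub>G i\<^esub> y i"
    unfolding mult_product_group using assms(1) by (simp only: restrict_apply' )
qed

lemma finite_subgroup_product_card:
  assumes M: "finite M" and grp: "\<And>i. i \<in> M \<Longrightarrow> group (G i)"
    and bnd: "\<And>i F. i \<in> M \<Longrightarrow> subgroup F (G i) \<Longrightarrow> finite F \<Longrightarrow> card F \<le> c i"
    and F: "subgroup F (product_group M G)" "finite F"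
  shows "card F \<le> (\<Prod>i\<in>M. c i)"
proof -
  let ?P = "product_group M G"
  have Pg: "group ?P" using grp by simp
  have sub: "F \<subseteq> (\<Pi>\<^sub>E i\<in>M. (\<lambda>x. x i) ` F)"
  proof
    fix x assume x: "x \<in> F"
    then have "x \<in> carrier ?P" using subgroup.subset[OF F(1)] by blast
    then have xP: "x \<in> (\<Pi>\<^sub>E i\<in>M. carrier (G i))" by (simp only: carrier_product_group)
    show "x \<in> (\<Pi>\<^sub>E i\<in>M. (\<lambda>x. x i) ` F)"
    proof (rule PiE_I)
      fix i assume "i \<in> M" show "x i \<in> (\<lambda>x. x i) ` F" using x by (rule imageI)
    next
      fix i assume "i \<notin> M" from xP this show "x i = undefined" by (rule PiE_arb)
    qed
  qed
  have "card F \<le> card (\<Pi>\<^sub>E i\<in>M. (\<lambda>x. x i) ` F)"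
    using sub by (rule card_mono[rotated]) (intro finite_PiE M finite_imageI F(2))
  also have "\<dots> = (\<Prod>i\<in>M. card ((\<lambda>x. x i) ` F))" by (rule card_PiE[OF M])
  also have "\<dots> \<le> (\<Prod>i\<in>M. c i)"
  proof (rule prod_mono)
    fix i assume i: "i \<in> M"
    interpret h: group_hom ?P "G i" "\<lambda>x. x i"
      using Pg grp[OF i] proj_hom[of i M G, OF i grp[OF i]] by (simp add: group_hom_def group_hom_axioms_def)
    have "subgroup ((\<lambda>x. x i) ` F) (G i)" by (rule h.subgroup_img_is_subgroup[OF F(1)])
    then show "0 \<le> card ((\<lambda>x. x i) ` F) \<and> card ((\<lambda>x. x i) ` F) \<le> c i"
      using bnd[OF i] F(2) by simp
  qed
  finally show ?thesis .
qed

lemma restrict_PiE_sub: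
  assumes "x \<in> (\<Pi>\<^sub>E i\<in>M. C i)" "J \<subseteq> M"
  shows "restrict x J \<in> (\<Pi>\<^sub>E i\<in>J. C i)"
proof (rule PiE_I)
  fix j assume j: "j \<in> J"
  have "restrict x J j = x j" using j by (rule restrict_apply')
  moreover have "x j \<in> C j" using assms(1) by (rule PiE_mem) (use j assms(2) in blast)
  ultimately show "restrict x J j \<in> C j" by (simp only:)
next
  fix j assume "j \<notin> J" then show "restrict x J j = undefined" by (simp only: restrict_apply if_False)
qed

lemma restrict_hom:
  assumes "J \<subseteq> M"
  shows "(\<lambda>x. restrict x J) \<in> hom (product_group M G) (product_group J G)"
proof (rule homI)
  fix x assume "x \<in> carrier (product_group M G)"
  then have "x \<in> (\<Pi>\<^sub>E i\<in>M. carrier (G i))" by (simp only: carrier_product_group)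
  then have "restrict x J \<in> (\<Pi>\<^sub>E i\<in>J. carrier (G i))" using assms(1) by (rule restrict_PiE_sub)
  then show "restrict x J \<in> carrier (product_group J G)" by (simp only: carrier_product_group)
next
  fix x y
  show "restrict (x \<otimes>\<^bsub>product_group M G\<^esub> y) J = restrict x J \<otimes>\<^bsub>product_group J G\<^esub> restrict y J"
    unfolding mult_product_group
  proof (rule ext)
    fix i show "restrict (\<lambda>i\<in>M. x i \<otimes>\<^bsub>G i\<^esub> y i) J i = (\<lambda>i\<in>J. restrict x J i \<otimes>\<^bsub>G i\<^esub> restrict y J i) i"
    proof (cases "i \<in> J")
      case True
      then have "i \<in> M" using assms by blast
      then show ?thesis using True by (simp only: restrict_apply' )
    next
      case False
      then show ?thesis by (simp only: restrict_apply if_False)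
    qed
  qed
qed

lemma nonempty_prod_set:
  assumes "u \<in> U" shows "list_prod G (replicate n u) \<in> prod_set G U n"
  by (rule prod_setI[OF refl]) (use assms in auto)

lemma main_U:
  fixes G :: "nat \<Rightarrow> ('b, 'c) monoid_scheme" and M :: "nat set" and \<alpha> \<beta> :: real and C m' :: nat
  assumes M: "finite M" and grpM: "\<And>i. i \<in> M \<Longrightarrow> group (G i)"
    and growth: "\<forall>i\<in>M. \<forall>V. finite V \<and> V \<subseteq> carrier (G i) \<and>
                   fg_exp_growth (G i) (generate (G i) V) \<longrightarrow>
                   (\<forall>n::nat. real (card (prod_set (G i) V n)) \<ge> (\<alpha> * real (card V)) powr (\<beta> * real n))"
    and pos: "\<alpha> > 0" "\<beta> > 0"
    and bnd: "\<And>F. subgroup F (product_group M G) \<Longrightarrow> finite F \<Longrightarrow> card F \<le> C"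
    and C1: "C \<ge> 1" and m': "card M \<le> m'" "m' \<ge> 1"
    and U: "finite U" "U \<subseteq> carrier (product_group M G)"
  shows "(\<exists>I J H1 H2. I \<union> J = M \<and> I \<inter> J = {} \<and>
          subgroup H1 (product_group I G) \<and> subgroup H2 (product_group J G) \<and>
          (\<forall>x\<in>generate (product_group M G) U. restrict x I \<in> H1 \<and> restrict x J \<in> H2) \<and>
          \<not> has_exp_growth (product_group J G) H2 \<and>
          infinite {x \<in> generate (product_group M G) U.
                      restrict x I = \<one>\<^bsub>product_group I G\<^esub>})
      \<or> (\<forall>n::nat. real (card (prod_set (product_group M G) U n))
                    \<ge> (min (\<alpha> ^ m') 1 / real C * real (card U)) powr (\<beta> / real m' * real n))"
proof -
  let ?P = "product_group M G"
  interpret P: group ?P using grpM by simp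
  define Ui where "Ui i = (\<lambda>x. x i) ` U" for i
  have Uic: "Ui i \<subseteq> carrier (G i)" if i: "i \<in> M" for i
  proof
    fix z assume "z \<in> Ui i"
    then obtain x where x: "x \<in> U" "z = x i" unfolding Ui_def by (rule imageE)
    have "x \<in> carrier ?P" using x(1) U(2) by blast
    then have "x \<in> (\<Pi>\<^sub>E i\<in>M. carrier (G i))" by (simp only: carrier_product_group)
    then have "x i \<in> carrier (G i)" using i by (rule PiE_mem)
    then show "z \<in> carrier (G i)" using x(2) by (simp only:)
  qed
  have Uif: "finite (Ui i)" for i unfolding Ui_def using U(1) by (rule finite_imageI)
  have "\<forall>i\<in>M. \<exists>L. L \<ge> 1 \<and> gr (G i) (Ui i) \<longlonglongrightarrow> L"
    using group.gr_converges[OF grpM Uic Uif] by blast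
  then obtain Lf where Lf: "\<forall>i\<in>M. Lf i \<ge> 1 \<and> gr (G i) (Ui i) \<longlonglongrightarrow> Lf i"
    by (rule bchoice[THEN exE])
  define I where "I = {i \<in> M. Lf i > 1}"
  define J where "J = M - I"
  have IM: "I \<subseteq> M" and JM: "J \<subseteq> M" unfolding I_def J_def by blast+
  have IJ: "I \<union> J = M" "I \<inter> J = {}" unfolding J_def using IM by blast+
  have finI: "finite I" and finJ: "finite J" using M IM JM finite_subset by blast+
  have limJ: "gr (G j) (Ui j) \<longlonglongrightarrow> 1" if j: "j \<in> J" for j
  proof -
    have jM: "j \<in> M" and nI: "j \<notin> I" using j unfolding J_def by blast+
    have "Lf j \<ge> 1" "gr (G j) (Ui j) \<longlonglongrightarrow> Lf j" using Lf jM by blast+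
    moreover have "\<not> Lf j > 1" using nI jM unfolding I_def by blast
    ultimately show ?thesis by (metis antisym not_less)
  qed
  let ?PI = "product_group I G"
  let ?PJ = "product_group J G"
  have grpI: "group ?PI" using grpM IM by (intro product_group) blast
  have grpJ: "group ?PJ" using grpM JM by (intro product_group) blast
  interpret hI: group_hom ?P ?PI "\<lambda>x. restrict x I"
    using P.is_group grpI restrict_hom[OF IM] by (simp add: group_hom_def group_hom_axioms_def)
  interpret hJ: group_hom ?P ?PJ "\<lambda>x. restrict x J"
    using P.is_group grpJ restrict_hom[OF JM] by (simp add: group_hom_def group_hom_axioms_def)
  have genc: "generate ?P U \<subseteq> carrier ?P" by (rule P.generate_incl[OF U(2)])
  define Ker where "Ker = {x \<in> generate ?P U. restrict x I = \<one>\<^bsub>?PI\<^esub>}"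
  show ?thesis
  proof (cases "finite Ker")
    case False
    define T where "T = (\<lambda>x. restrict x J) ` U"
    have Tc: "T \<subseteq> carrier ?PJ" unfolding T_def using U(2) hI.hom_closed hJ.hom_closed by blast
    have Tf: "finite T" unfolding T_def using U(1) by (rule finite_imageI)
    have TU: "(\<lambda>x. x j) ` T = Ui j" if j: "j \<in> J" for j
    proof -
      have "(\<lambda>x. x j) ` T = (\<lambda>x. restrict x J j) ` U" unfolding T_def by (rule image_image)
      also have "\<dots> = (\<lambda>x. x j) ` U" using j by (simp only: restrict_apply')
      finally show ?thesis unfolding Ui_def .
    qed
    have ne: "\<not> has_exp_growth ?PJ (generate ?PJ T)"
      by (rule product_not_exp[OF finJ _ Tc Tf]) (use grpM JM limJ TU in auto)
    have gimg: "generate ?PJ T = (\<lambda>x. restrict x J) ` generate ?P U"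
      unfolding T_def by (rule hJ.generate_img[OF U(2)])
    have H: "\<forall>x\<in>generate ?P U. restrict x I \<in> carrier ?PI \<and> restrict x J \<in> generate ?PJ T"
    proof
      fix x assume x: "x \<in> generate ?P U"
      then have "x \<in> carrier ?P" using genc by blast
      then have "restrict x I \<in> carrier ?PI" by (rule hI.hom_closed)
      moreover have "restrict x J \<in> generate ?PJ T" unfolding gimg using x by (rule imageI)
      ultimately show "restrict x I \<in> carrier ?PI \<and> restrict x J \<in> generate ?PJ T" by (rule conjI)
    qed
    have "subgroup (carrier ?PI) ?PI" by (rule group.subgroup_self[OF grpI])
    moreover have "subgroup (generate ?PJ T) ?PJ" by (rule group.generate_is_subgroup[OF grpJ Tc])
    ultimately show ?thesis
      using IJ H ne False unfolding Ker_def by blast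
  next
    case True
    have "Ker = generate ?P U \<inter> kernel ?P ?PI (\<lambda>x. restrict x I)"
      unfolding Ker_def kernel_def using genc by blast
    then have Ksub: "subgroup Ker ?P"
      using P.subgroups_Inter_pair[OF P.generate_is_subgroup[OF U(2)] hI.subgroup_kernel] by simp
    have cardK: "card Ker \<le> C" by (rule bnd[OF Ksub True])
    show ?thesis
    proof (rule disjI2, intro allI)
      fix n :: nat
      define A where "A = min (\<alpha> ^ m') 1 / real C * real (card U)"
      have A0: "A \<ge> 0" unfolding A_def using pos C1 by simp
      have e0: "\<beta> / real m' * real n \<ge> 0" using pos m' by simp
      show "real (card (prod_set ?P U n)) \<ge> (min (\<alpha> ^ m') 1 / real C * real (card U)) powr (\<beta> / real m' * real n)"
      proof (cases "U = {}")
        case True then show ?thesis by simp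
      next
        case False
        then obtain u0 where u0: "u0 \<in> U" by blast
        have mem: "list_prod ?P (replicate n u0) \<in> prod_set ?P U n" by (rule nonempty_prod_set[OF u0])
        have fin: "finite (prod_set ?P U n)" by (rule finite_prod_set[OF U(1)])
        have "card (prod_set ?P U n) \<noteq> 0" using fin mem card_0_eq by blast
        then have LHS1: "real (card (prod_set ?P U n)) \<ge> 1" by simp
        have fib: "card {x \<in> U. restrict x I = y} \<le> C" if y: "y \<in> (\<lambda>x. restrict x I) ` U" for y
        proof -
          obtain x0 where x0: "x0 \<in> U" "y = restrict x0 I" using y by (rule imageE)
          have x0c: "x0 \<in> carrier ?P" using x0(1) U(2) by blast
          have ix0: "inv\<^bsub>?P\<^esub> x0 \<in> carrier ?P" by (rule P.inv_closed[OF x0c])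
          have inj: "inj_on (\<lambda>x. x \<otimes>\<^bsub>?P\<^esub> inv\<^bsub>?P\<^esub> x0) {x \<in> U. restrict x I = y}"
          proof (rule inj_onI)
            fix a b assume a: "a \<in> {x \<in> U. restrict x I = y}" and b: "b \<in> {x \<in> U. restrict x I = y}"
              and eq: "a \<otimes>\<^bsub>?P\<^esub> inv\<^bsub>?P\<^esub> x0 = b \<otimes>\<^bsub>?P\<^esub> inv\<^bsub>?P\<^esub> x0"
            have ac: "a \<in> carrier ?P" and bc: "b \<in> carrier ?P" using a b U(2) by blast+
            show "a = b" by (rule iffD1[OF P.right_cancel[OF ix0 ac bc] eq])
          qed
          have img: "(\<lambda>x. x \<otimes>\<^bsub>?P\<^esub> inv\<^bsub>?P\<^esub> x0) ` {x \<in> U. restrict x I = y} \<subseteq> Ker"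
          proof
            fix z assume "z \<in> (\<lambda>x. x \<otimes>\<^bsub>?P\<^esub> inv\<^bsub>?P\<^esub> x0) ` {x \<in> U. restrict x I = y}"
            then obtain a where a: "a \<in> U" "restrict a I = y" and z: "z = a \<otimes>\<^bsub>?P\<^esub> inv\<^bsub>?P\<^esub> x0"
              by blast
            have ac: "a \<in> carrier ?P" using a(1) U(2) by blast
            have zg: "z \<in> generate ?P U" unfolding z
              by (rule generate.eng[OF generate.incl[OF a(1)] generate.inv[OF x0(1)]])
            have yc: "y \<in> carrier ?PI" unfolding x0(2) by (rule hI.hom_closed[OF x0c])
            have "restrict z I = restrict a I \<otimes>\<^bsub>?PI\<^esub> restrict (inv\<^bsub>?P\<^esub> x0) I"
              unfolding z by (rule hI.hom_mult[OF ac ix0])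
            also have "\<dots> = y \<otimes>\<^bsub>?PI\<^esub> inv\<^bsub>?PI\<^esub> y"
              unfolding a(2) x0(2) using hI.hom_inv[OF x0c] by (simp only:)
            also have "\<dots> = \<one>\<^bsub>?PI\<^esub>" by (rule group.r_inv[OF grpI yc])
            finally show "z \<in> Ker" unfolding Ker_def using zg by blast
          qed
          have "card {x \<in> U. restrict x I = y} \<le> card Ker" by (rule card_inj_on_le[OF inj img True])
          then show ?thesis using cardK by linarith
        qed
        have cardU: "card U \<le> card ((\<lambda>x. restrict x I) ` U) * C"
        proof -
          have "U = (\<Union>y\<in>(\<lambda>x. restrict x I) ` U. {x \<in> U. restrict x I = y})" by blast
          then have "card U = card (\<Union>y\<in>(\<lambda>x. restrict x I) ` U. {x \<in> U. restrict x I = y})" by (rule arg_cong)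
          also have "\<dots> \<le> (\<Sum>y\<in>(\<lambda>x. restrict x I) ` U. card {x \<in> U. restrict x I = y})"
            by (rule card_UN_le) (use U(1) in simp)
          also have "\<dots> \<le> card ((\<lambda>x. restrict x I) ` U) * C"
            using fib sum_bounded_above[of "(\<lambda>x. restrict x I) ` U" "\<lambda>y. card {x \<in> U. restrict x I = y}" C]
            by simp
          finally show ?thesis .
        qed
        show ?thesis
        proof (cases "I = {}")
          case True
          have "(\<lambda>x. restrict x I) ` U \<subseteq> {\<lambda>_. undefined}"
          proof
            fix z assume "z \<in> (\<lambda>x. restrict x I) ` U"
            then obtain x where z: "z = restrict x I" by blast
            have "restrict x I = (\<lambda>_. undefined)" unfolding True by (rule ext) (simp only: restrict_apply empty_iff if_False)
            then show "z \<in> {\<lambda>_. undefined}" using z by simp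
          qed
          from card_mono[OF finite.insertI[OF finite.emptyI] this]
          have c1: "card ((\<lambda>x. restrict x I) ` U) \<le> 1" by simp
          have "card ((\<lambda>x. restrict x I) ` U) * C \<le> 1 * C" by (rule mult_le_mono1[OF c1])
          with cardU have "card U \<le> 1 * C" by (rule le_trans)
          then have cU: "card U \<le> C" by (simp only: mult_1)
          have "A \<le> 1 / real C * real (card U)" unfolding A_def using C1
            by (intro mult_right_mono divide_right_mono) auto
          also have "\<dots> \<le> 1" using cU C1 by (simp add: field_simps)
          finally have A1: "A \<le> 1" .
          have "A powr (\<beta> / real m' * real n) \<le> 1" using A0 A1 e0 by (intro powr_le1) auto
          then show ?thesis using LHS1 unfolding A_def by linarith
        next
          case False
          define N where "N = Max ((\<lambda>i. card (Ui i)) ` I)"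
          have "N \<in> (\<lambda>i. card (Ui i)) ` I" unfolding N_def using finI False by (intro Max_in) auto
          then obtain i0 where i0: "i0 \<in> I" "card (Ui i0) = N" by blast
          have Nmax: "card (Ui i) \<le> N" if "i \<in> I" for i unfolding N_def using finI that by (intro Max_ge) auto
          have i0M: "i0 \<in> M" using i0(1) IM by blast
          have "u0 i0 \<in> Ui i0" unfolding Ui_def using u0 by (rule imageI)
          then have "card (Ui i0) \<noteq> 0" using Uif[of i0] card_0_eq by blast
          then have N1: "N \<ge> 1" using i0(2) by simp
          have sub: "(\<lambda>x. restrict x I) ` U \<subseteq> (\<Pi>\<^sub>E i\<in>I. Ui i)"
          proof
            fix z assume "z \<in> (\<lambda>x. restrict x I) ` U"
            then obtain x where x: "x \<in> U" "z = restrict x I" by blast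
            show "z \<in> (\<Pi>\<^sub>E i\<in>I. Ui i)" unfolding x(2)
            proof (rule PiE_I)
              fix i assume i: "i \<in> I"
              have "restrict x I i = x i" using i by (rule restrict_apply')
              moreover have "x i \<in> Ui i" unfolding Ui_def using x(1) by (rule imageI)
              ultimately show "restrict x I i \<in> Ui i" by (simp only:)
            next
              fix i assume "i \<notin> I" then show "restrict x I i = undefined"
                by (simp only: restrict_apply if_False)
            qed
          qed
          have cIm: "card I \<le> m'" using card_mono[OF M IM] m'(1) by linarith
          have "card ((\<lambda>x. restrict x I) ` U) \<le> card (\<Pi>\<^sub>E i\<in>I. Ui i)"
            by (rule card_mono[OF _ sub]) (intro finite_PiE finI Uif)
          also have "\<dots> = (\<Prod>i\<in>I. card (Ui i))" by (rule card_PiE[OF finI])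
          also have "\<dots> \<le> (\<Prod>i\<in>I. N)" by (rule prod_mono) (use Nmax in simp)
          also have "\<dots> = N ^ card I" by simp
          also have "\<dots> \<le> N ^ m'" by (rule power_increasing[OF cIm N1])
          finally have imgle: "card ((\<lambda>x. restrict x I) ` U) \<le> N ^ m'" .
          have "card ((\<lambda>x. restrict x I) ` U) * C \<le> N ^ m' * C" by (rule mult_le_mono1[OF imgle])
          with cardU have cU: "card U \<le> N ^ m' * C" by (rule le_trans)
          have "real (card U) \<le> real (N ^ m' * C)" using cU by (simp only: of_nat_le_iff)
          also have "\<dots> = real N ^ m' * real C" by simp
          finally have cUr: "real (card U) \<le> real N ^ m' * real C" .
          have Cr: "real C \<ge> 1" using C1 by simp
          have "A \<le> \<alpha> ^ m' / real C * real (card U)" unfolding A_def using Cr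
            by (intro mult_right_mono divide_right_mono) auto
          also have "\<dots> \<le> \<alpha> ^ m' / real C * (real N ^ m' * real C)"
            using cUr pos Cr by (intro mult_left_mono) auto
          also have "\<dots> = (\<alpha> * real N) ^ m'" using Cr by (simp add: power_mult_distrib)
          finally have AN: "A \<le> (\<alpha> * real N) ^ m'" .
          have aN: "\<alpha> * real N > 0" using pos N1 by simp
          have "A powr (\<beta> / real m' * real n) \<le> ((\<alpha> * real N) ^ m') powr (\<beta> / real m' * real n)"
            by (rule powr_mono2[OF e0 A0 AN])
          also have "\<dots> = ((\<alpha> * real N) powr (real m')) powr (\<beta> / real m' * real n)"
            using aN by (simp add: powr_realpow)
          also have "\<dots> = (\<alpha> * real N) powr (real m' * (\<beta> / real m' * real n))" by (rule powr_powr)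
          also have "\<dots> = (\<alpha> * real N) powr (\<beta> * real n)" using m'(2) by simp
          finally have A_le: "A powr (\<beta> / real m' * real n) \<le> (\<alpha> * real N) powr (\<beta> * real n)" .
          have Lgt: "Lf i0 > 1" using i0(1) unfolding I_def by blast
          have conv: "gr (G i0) (Ui i0) \<longlonglongrightarrow> Lf i0" using Lf i0M by blast
          have fg: "fg_exp_growth (G i0) (generate (G i0) (Ui i0))"
            by (rule group.fg_exp_growthI[OF grpM[OF i0M] Uic[OF i0M] Uif conv Lgt])
          have "\<forall>V. finite V \<and> V \<subseteq> carrier (G i0) \<and> fg_exp_growth (G i0) (generate (G i0) V) \<longrightarrow>
                   (\<forall>n::nat. real (card (prod_set (G i0) V n)) \<ge> (\<alpha> * real (card V)) powr (\<beta> * real n))"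
            using growth i0M by blast
          then have "\<forall>n::nat. real (card (prod_set (G i0) (Ui i0) n)) \<ge> (\<alpha> * real (card (Ui i0))) powr (\<beta> * real n)"
            using Uif[of i0] Uic[OF i0M] fg by blast
          then have gb: "real (card (prod_set (G i0) (Ui i0) n)) \<ge> (\<alpha> * real N) powr (\<beta> * real n)"
            using i0(2) by simp
          have "card (prod_set (G i0) ((\<lambda>x. x i0) ` U) n) \<le> card (prod_set ?P U n)"
            by (rule card_prod_set_proj[OF i0M U(2) U(1)])
          then have "real (card (prod_set (G i0) (Ui i0) n)) \<le> real (card (prod_set ?P U n))"
            unfolding Ui_def by (simp only: of_nat_le_iff)
          then show ?thesis using A_le gb unfolding A_def by linarith
        qed
      qed
    qed
  qed
qed

theorem proposition2p28:
  fixes G :: "nat \<Rightarrow> ('b, 'c) monoid_scheme" and m :: nat and \<alpha> \<beta> :: real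
  assumes grp: "\<forall>i\<in>{1..m}. group (G i)"
    and vtf: "\<forall>i\<in>{1..m}. virtually_torsion_free (G i)"
    and pos: "\<alpha> > 0" "\<beta> > 0"
    and growth: "\<forall>i\<in>{1..m}. \<forall>V. finite V \<and> V \<subseteq> carrier (G i) \<and>
                   fg_exp_growth (G i) (generate (G i) V) \<longrightarrow>
                   (\<forall>n::nat. real (card (prod_set (G i) V n)) \<ge> (\<alpha> * real (card V)) powr (\<beta> * real n))"
  shows "\<exists>\<alpha>' \<beta>' :: real. \<alpha>' > 0 \<and> \<beta>' > 0 \<and>
    (\<forall>U. finite U \<and> U \<subseteq> carrier (product_group {1..m} G) \<longrightarrow>
      (\<exists>I J H1 H2. I \<union> J = {1..m} \<and> I \<inter> J = {} \<and>
          subgroup H1 (product_group I G) \<and> subgroup H2 (product_group J G) \<and>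
          (\<forall>x\<in>generate (product_group {1..m} G) U. restrict x I \<in> H1 \<and> restrict x J \<in> H2) \<and>
          \<not> has_exp_growth (product_group J G) H2 \<and>
          infinite {x \<in> generate (product_group {1..m} G) U.
                      restrict x I = \<one>\<^bsub>product_group I G\<^esub>})
      \<or> (\<forall>n::nat. real (card (prod_set (product_group {1..m} G) U n))
                    \<ge> (\<alpha>' * real (card U)) powr (\<beta>' * real n)))"
proof -
  let ?M = "{1..m}"
  have grpM: "\<And>i. i \<in> ?M \<Longrightarrow> group (G i)" using grp by blast
  have "\<forall>i\<in>?M. \<exists>K. subgroup K (G i) \<and> finite (rcosets\<^bsub>G i\<^esub> K) \<and> torsion_free_subgroup (G i) K"
    using vtf unfolding virtually_torsion_free_def by blast
  then obtain K where K: "\<forall>i\<in>?M. subgroup (K i) (G i) \<and> finite (rcosets\<^bsub>G i\<^esub> (K i)) \<and> torsion_free_subgroup (G i) (K i)"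
    by (rule bchoice[THEN exE])
  define c where "c i = card (rcosets\<^bsub>G i\<^esub> (K i))" for i
  define C where "C = (\<Prod>i\<in>?M. c i)"
  have c1: "1 \<le> c i" if i: "i \<in> ?M" for i
  proof -
    interpret Gi: group "G i" by (rule grpM[OF i])
    have Ks: "subgroup (K i) (G i)" and Kf: "finite (rcosets\<^bsub>G i\<^esub> (K i))" using K i by blast+
    have "K i #>\<^bsub>G i\<^esub> \<one>\<^bsub>G i\<^esub> \<in> rcosets\<^bsub>G i\<^esub> (K i)"
      by (rule Gi.rcosetsI[OF subgroup.subset[OF Ks] Gi.one_closed])
    then have "card (rcosets\<^bsub>G i\<^esub> (K i)) \<noteq> 0" using Kf card_0_eq by blast
    then show ?thesis unfolding c_def by simp
  qed
  have C1: "C \<ge> 1" unfolding C_def by (rule prod_ge_1) (rule c1)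
  have bnd: "card F \<le> C" if F: "subgroup F (product_group ?M G)" "finite F" for F
    unfolding C_def
  proof (rule finite_subgroup_product_card[OF _ grpM _ F])
    show "finite ?M" by simp
  next
    fix i F' assume i: "i \<in> ?M" and F': "subgroup F' (G i)" "finite F'"
    have "subgroup (K i) (G i)" "finite (rcosets\<^bsub>G i\<^esub> (K i))" "torsion_free_subgroup (G i) (K i)"
      using K i by blast+
    then show "card F' \<le> c i" unfolding c_def
      by (rule group.finite_subgroup_card_le[OF grpM[OF i] _ _ _ F'])
  qed
  define m' where "m' = max m 1"
  have m': "card ?M \<le> m'" "m' \<ge> 1" unfolding m'_def by auto
  define \<alpha>' where "\<alpha>' = min (\<alpha> ^ m') 1 / real C"
  define \<beta>' where "\<beta>' = \<beta> / real m'"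
  have a'pos: "\<alpha>' > 0" unfolding \<alpha>'_def using pos C1 by simp
  have b'pos: "\<beta>' > 0" unfolding \<beta>'_def using pos m' by simp
  show ?thesis
  proof (rule exI[of _ \<alpha>'], rule exI[of _ \<beta>'], intro conjI a'pos b'pos allI impI)
    fix U assume U: "finite U \<and> U \<subseteq> carrier (product_group {1..m} G)"
    note R = main_U[OF finite_atLeastAtMost grpM growth pos(1) pos(2) bnd C1 m'(1) m'(2) conjunct1[OF U] conjunct2[OF U]]
    show "(\<exists>I J H1 H2. I \<union> J = {1..m} \<and> I \<inter> J = {} \<and>
          subgroup H1 (product_group I G) \<and> subgroup H2 (product_group J G) \<and>
          (\<forall>x\<in>generate (product_group {1..m} G) U. restrict x I \<in> H1 \<and> restrict x J \<in> H2) \<and>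
          \<not> has_exp_growth (product_group J G) H2 \<and>
          infinite {x \<in> generate (product_group {1..m} G) U.
                      restrict x I = \<one>\<^bsub>product_group I G\<^esub>})
      \<or> (\<forall>n::nat. real (card (prod_set (product_group {1..m} G) U n))
                    \<ge> (\<alpha>' * real (card U)) powr (\<beta>' * real n))"
      using R unfolding \<alpha>'_def \<beta>'_def .
  qed
qed

end
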